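(* Let $K$ be a compact hypergroup and let $\sigma$ be a non-degenerate probability measure on $K$. Then every weak$^*$ cluster point $\sigma_0$ in $M(K)$ of the sequence $\left(\frac1n\sum_{k=1}^n\sigma^k\right)_{n\geq1}$ is the normalized Haar measure on $K$.
   Context: $K$ is a compact hypergroup (Jewett/Bloom–Heyer sense), assumed to have a left Haar measure; the normalized Haar measure is the Haar measure of total mass one. $M(K)=C(K)^*$ is the measure algebra and $\sigma^k$ the $k$-fold convolution power of $\sigma$. For subsets $A,B\subseteq K$, $A*B=\bigcup_{a\in A,b\in B}\operatorname{supp}(\delta_a*\delta_b)$ and $A^n$ is the $n$-fold product. A measure $\mu\in M(K)$ is non-degenerate if $K=\overline{\bigcup_{n\geq1}(\operatorname{supp}|\mu|)^n}$. *)

theory Defs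
  imports "HOL-Analysis.Analysis"
begin

text \<open>Measures on a compact Hausdorff space K (a type 'a with compact UNIV) are
  represented, as in the paper, as elements of M(K) = C(K)^*, i.e. as bounded linear
  functionals on the continuous real-valued functions on K.  Functionals are HOL functions
  of type ('a => real) => real; only their values on C(K) matter.\<close>

definition Cfun :: "('a::topological_space \<Rightarrow> real) set" where
  "Cfun = {f. continuous_on UNIV f}"

definition meas :: "(('a::topological_space \<Rightarrow> real) \<Rightarrow> real) \<Rightarrow> bool" where
  "meas L \<longleftrightarrow>
     (\<forall>f\<in>Cfun. \<forall>g\<in>Cfun. \<forall>a b. L (\<lambda>x. a * f x + b * g x) = a * L f + b * L g) \<and>
     (\<exists>B. \<forall>f\<in>Cfun. (\<forall>x. \<bar>f x\<bar> \<le> 1) \<longrightarrow> \<bar>L f\<bar> \<le> B)"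

definition positive_meas :: "(('a::topological_space \<Rightarrow> real) \<Rightarrow> real) \<Rightarrow> bool" where
  "positive_meas L \<longleftrightarrow> meas L \<and> (\<forall>f\<in>Cfun. (\<forall>x. 0 \<le> f x) \<longrightarrow> 0 \<le> L f)"

definition prob_meas :: "(('a::topological_space \<Rightarrow> real) \<Rightarrow> real) \<Rightarrow> bool" where
  "prob_meas L \<longleftrightarrow> positive_meas L \<and> L (\<lambda>_. 1) = 1"

text \<open>Support of a measure: complement of the largest open set on which it vanishes.\<close>
definition msupp :: "(('a::topological_space \<Rightarrow> real) \<Rightarrow> real) \<Rightarrow> 'a set" where
  "msupp L = {x. \<forall>U. open U \<and> x \<in> U \<longrightarrow>
                   (\<exists>f\<in>Cfun. (\<forall>y. y \<notin> U \<longrightarrow> f y = 0) \<and> L f \<noteq> 0)}"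

text \<open>Hypergroup structure given by the point-mass convolution
  pc x y = delta_x * delta_y, identity e and involution iv (Jewett's axioms,
  K compact Hausdorff).\<close>

definition hypergroup ::
  "('a::t2_space \<Rightarrow> 'a \<Rightarrow> (('a \<Rightarrow> real) \<Rightarrow> real)) \<Rightarrow> 'a \<Rightarrow> ('a \<Rightarrow> 'a) \<Rightarrow> bool" where
  "hypergroup pc e iv \<longleftrightarrow>
     compact (UNIV :: 'a set) \<and>
     (\<forall>x y. prob_meas (pc x y)) \<and>
     (\<forall>f\<in>Cfun. continuous_on UNIV (\<lambda>p. pc (fst p) (snd p) f)) \<and>
     (\<forall>U. open U \<longrightarrow> open {p. msupp (pc (fst p) (snd p)) \<subseteq> U}
                     \<and> open {p. msupp (pc (fst p) (snd p)) \<inter> U \<noteq> {}}) \<and>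
     (\<forall>f\<in>Cfun. \<forall>x y z. pc x y (\<lambda>u. pc u z f) = pc y z (\<lambda>v. pc x v f)) \<and>
     (\<forall>f\<in>Cfun. \<forall>x. pc e x f = f x \<and> pc x e f = f x) \<and>
     continuous_on UNIV iv \<and> (\<forall>x. iv (iv x) = x) \<and>
     (\<forall>f\<in>Cfun. \<forall>x y. pc x y (\<lambda>u. f (iv u)) = pc (iv y) (iv x) f) \<and>
     (\<forall>x y. e \<in> msupp (pc x (iv y)) \<longleftrightarrow> x = y)"

definition mconv ::
  "('a \<Rightarrow> 'a \<Rightarrow> (('a \<Rightarrow> real) \<Rightarrow> real)) \<Rightarrow> (('a \<Rightarrow> real) \<Rightarrow> real) \<Rightarrow> (('a \<Rightarrow> real) \<Rightarrow> real)
     \<Rightarrow> (('a \<Rightarrow> real) \<Rightarrow> real)" where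
  "mconv pc \<mu> \<nu> = (\<lambda>f. \<mu> (\<lambda>x. \<nu> (\<lambda>y. pc x y f)))"

text \<open>k-fold convolution power (used for k >= 1).\<close>
fun mpow ::
  "('a \<Rightarrow> 'a \<Rightarrow> (('a \<Rightarrow> real) \<Rightarrow> real)) \<Rightarrow> (('a \<Rightarrow> real) \<Rightarrow> real) \<Rightarrow> nat
     \<Rightarrow> (('a \<Rightarrow> real) \<Rightarrow> real)" where
  "mpow pc \<sigma> 0 = (\<lambda>f. 0)"
| "mpow pc \<sigma> (Suc 0) = \<sigma>"
| "mpow pc \<sigma> (Suc (Suc k)) = mconv pc (mpow pc \<sigma> (Suc k)) \<sigma>"

definition setprod :: "('a::topological_space \<Rightarrow> 'a \<Rightarrow> (('a \<Rightarrow> real) \<Rightarrow> real)) \<Rightarrow> 'a set \<Rightarrow> 'a set \<Rightarrow> 'a set" where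
  "setprod pc A B = (\<Union>a\<in>A. \<Union>b\<in>B. msupp (pc a b))"

fun setpow :: "('a::topological_space \<Rightarrow> 'a \<Rightarrow> (('a \<Rightarrow> real) \<Rightarrow> real)) \<Rightarrow> 'a set \<Rightarrow> nat \<Rightarrow> 'a set" where
  "setpow pc A 0 = {}"
| "setpow pc A (Suc 0) = A"
| "setpow pc A (Suc (Suc n)) = setprod pc (setpow pc A (Suc n)) A"

text \<open>Non-degenerate: K = closure of the union of (supp |sigma|)^n, n >= 1.
  For the probability measures considered here supp |sigma| = supp sigma.\<close>
definition nondegenerate ::
  "('a::topological_space \<Rightarrow> 'a \<Rightarrow> (('a \<Rightarrow> real) \<Rightarrow> real)) \<Rightarrow> (('a \<Rightarrow> real) \<Rightarrow> real) \<Rightarrow> bool" where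
  "nondegenerate pc \<sigma> \<longleftrightarrow> closure (\<Union>n\<in>{1..}. setpow pc (msupp \<sigma>) n) = UNIV"

definition left_haar ::
  "('a::topological_space \<Rightarrow> 'a \<Rightarrow> (('a \<Rightarrow> real) \<Rightarrow> real)) \<Rightarrow> (('a \<Rightarrow> real) \<Rightarrow> real) \<Rightarrow> bool" where
  "left_haar pc \<omega> \<longleftrightarrow> positive_meas \<omega> \<and> (\<exists>f\<in>Cfun. \<omega> f \<noteq> 0) \<and>
     (\<forall>x. \<forall>f\<in>Cfun. \<omega> (\<lambda>y. pc x y f) = \<omega> f)"

definition normalized_haar ::
  "('a::topological_space \<Rightarrow> 'a \<Rightarrow> (('a \<Rightarrow> real) \<Rightarrow> real)) \<Rightarrow> (('a \<Rightarrow> real) \<Rightarrow> real) \<Rightarrow> bool" where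
  "normalized_haar pc \<omega> \<longleftrightarrow> left_haar pc \<omega> \<and> \<omega> (\<lambda>_. 1) = 1"

definition weakstar_cluster ::
  "(nat \<Rightarrow> (('a::topological_space \<Rightarrow> real) \<Rightarrow> real)) \<Rightarrow> (('a \<Rightarrow> real) \<Rightarrow> real) \<Rightarrow> bool" where
  "weakstar_cluster s L \<longleftrightarrow> meas L \<and>
     (\<forall>F. finite F \<and> F \<subseteq> Cfun \<longrightarrow> (\<forall>\<epsilon>>0. \<forall>N. \<exists>n\<ge>N. n \<ge> 1 \<and>
        (\<forall>f\<in>F. \<bar>s n f - L f\<bar> < \<epsilon>)))"

end

theory Submission
  imports Defs
begin


lemma Cfun_iff: "f \<in> Cfun \<longleftrightarrow> continuous_on UNIV f"
  by (simp add: Cfun_def)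

lemma pm_lin:
  assumes "positive_meas \<mu>" "f \<in> Cfun" "g \<in> Cfun"
  shows "\<mu> (\<lambda>x. a * f x + b * g x) = a * \<mu> f + b * \<mu> g"
  using assms unfolding positive_meas_def meas_def by blast

lemma pm_pos:
  assumes "positive_meas \<mu>" "f \<in> Cfun" "\<And>x. 0 \<le> f x"
  shows "0 \<le> \<mu> f"
  using assms unfolding positive_meas_def by blast

lemma pm_add:
  assumes "positive_meas \<mu>" "f \<in> Cfun" "g \<in> Cfun"
  shows "\<mu> (\<lambda>x. f x + g x) = \<mu> f + \<mu> g"
  using pm_lin[OF assms, of 1 1] by simp

lemma pm_scale:
  assumes "positive_meas \<mu>" "f \<in> Cfun"
  shows "\<mu> (\<lambda>x. c * f x) = c * \<mu> f"
  using pm_lin[OF assms assms(2), of c 0] by simp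

lemma pm_diff:
  assumes "positive_meas \<mu>" "f \<in> Cfun" "g \<in> Cfun"
  shows "\<mu> (\<lambda>x. f x - g x) = \<mu> f - \<mu> g"
  using pm_lin[OF assms, of 1 "-1"] by simp

lemma pm_neg:
  assumes "positive_meas \<mu>" "f \<in> Cfun"
  shows "\<mu> (\<lambda>x. - f x) = - \<mu> f"
  using pm_scale[OF assms, of "-1"] by simp

lemma const_Cfun[simp]: "(\<lambda>x. c) \<in> Cfun"
  by (simp add: Cfun_iff)

lemma pm_const:
  assumes "positive_meas \<mu>"
  shows "\<mu> (\<lambda>x. c) = c * \<mu> (\<lambda>x. 1)"
  using pm_scale[OF assms const_Cfun, of c 1] by simp

lemma pm_mono:
  assumes "positive_meas \<mu>" "f \<in> Cfun" "g \<in> Cfun" "\<And>x. f x \<le> g x"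
  shows "\<mu> f \<le> \<mu> g"
proof -
  have "(\<lambda>x. g x - f x) \<in> Cfun" using assms(2,3) by (auto simp: Cfun_iff intro!: continuous_intros)
  then have "0 \<le> \<mu> (\<lambda>x. g x - f x)" using pm_pos[OF assms(1)] assms(4) by auto
  then show ?thesis using pm_diff[OF assms(1,3,2)] by simp
qed

lemma pm_one_nonneg:
  assumes "positive_meas \<mu>"
  shows "0 \<le> \<mu> (\<lambda>x. 1)"
  using pm_pos[OF assms const_Cfun] by simp

lemma pm_bound:
  assumes "positive_meas \<mu>" "f \<in> Cfun" "\<And>x. \<bar>f x\<bar> \<le> c"
  shows "\<bar>\<mu> f\<bar> \<le> c * \<mu> (\<lambda>x. 1)"
proof -
  have "\<mu> f \<le> \<mu> (\<lambda>x. c)"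
    using pm_mono[OF assms(1) assms(2) const_Cfun, of c] assms(3) abs_le_D1 by blast
  moreover have "\<mu> (\<lambda>x. - c) \<le> \<mu> f"
    using pm_mono[OF assms(1) const_Cfun assms(2), of "-c"] assms(3) abs_le_D2 by (metis minus_le_iff)
  ultimately show ?thesis using pm_const[OF assms(1), of c] pm_const[OF assms(1), of "-c"] by auto
qed

lemma Cfun_sum_list: "set fs \<subseteq> Cfun \<Longrightarrow> (\<lambda>x. \<Sum>f\<leftarrow>fs. f x) \<in> Cfun"
  by (induction fs) (auto simp: Cfun_iff intro!: continuous_intros)

lemma pm_sum_list:
  assumes "positive_meas \<mu>"
  shows "set fs \<subseteq> Cfun \<Longrightarrow> \<mu> (\<lambda>x. \<Sum>f\<leftarrow>fs. f x) = (\<Sum>f\<leftarrow>fs. \<mu> f)"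
proof (induction fs)
  case Nil
  then show ?case using pm_const[OF assms, of 0] by simp
next
  case (Cons f fs)
  then show ?case using pm_add[OF assms, of f "\<lambda>x. \<Sum>f\<leftarrow>fs. f x"] Cfun_sum_list[of fs] by simp
qed

lemma bounded_Cfun:
  assumes "compact (UNIV::'a::topological_space set)" "(f::'a \<Rightarrow> real) \<in> Cfun"
  shows "\<exists>B. \<forall>x. \<bar>f x\<bar> \<le> B"
proof -
  have "compact (range f)" using assms compact_continuous_image by (auto simp: Cfun_iff)
  then have "bounded (range f)" by (rule compact_imp_bounded)
  then show ?thesis by (auto simp: bounded_iff)
qed

lemma cont_approx:
  fixes h :: "'a::t2_space \<Rightarrow> real"
  assumes "\<And>\<epsilon>. \<epsilon> > 0 \<Longrightarrow> \<exists>h'. continuous_on UNIV h' \<and> (\<forall>x. \<bar>h x - h' x\<bar> \<le> \<epsilon>)"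
  shows "continuous_on UNIV h"
proof -
  have "isCont h x" for x
  proof -
    have "\<forall>\<^sub>F y in at x. dist (h y) (h x) < e" if e: "e > 0" for e
    proof -
      obtain h' where h': "continuous_on UNIV h'" "\<forall>x. \<bar>h x - h' x\<bar> \<le> e/3"
        using assms[of "e/3"] e by auto
      then have "isCont h' x" by (simp add: continuous_on_eq_continuous_at)
      then have "\<forall>\<^sub>F y in at x. dist (h' y) (h' x) < e/3"
        using e unfolding isCont_def tendsto_iff by (meson divide_pos_pos zero_less_numeral)
      then show ?thesis
      proof (rule eventually_mono)
        fix y assume "dist (h' y) (h' x) < e/3"
        then show "dist (h y) (h x) < e" using h'(2)[rule_format, of x] h'(2)[rule_format, of y]
          unfolding dist_real_def by linarith
      qed
    qed
    then show ?thesis by (simp add: isCont_def tendsto_iff)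
  qed
  then show ?thesis by (simp add: continuous_on_eq_continuous_at)
qed




lemma small_zero:
  fixes X C :: real
  assumes "C \<ge> 0" "\<And>\<epsilon>. \<epsilon> > 0 \<Longrightarrow> \<bar>X\<bar> \<le> \<epsilon> * C"
  shows "X = 0"
proof (rule ccontr)
  assume "X \<noteq> 0"
  then have p: "\<bar>X\<bar> > 0" by simp
  have "\<bar>X\<bar> \<le> (\<bar>X\<bar> / (2 * (C + 1))) * C" using assms(2)[of "\<bar>X\<bar> / (2 * (C + 1))"] p assms(1) by simp
  also have "\<dots> = \<bar>X\<bar> * (C / (2 * (C + 1)))" by simp
  also have "\<dots> < \<bar>X\<bar> * 1"
    using p assms(1) by (intro mult_strict_left_mono) (auto simp: field_simps)
  finally show False by simp
qed

lemma slice1: "continuous_on UNIV G \<Longrightarrow> (\<lambda>y. G (x, y)) \<in> Cfun"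
  unfolding Cfun_iff by (rule continuous_on_compose2[of UNIV G]) (auto intro!: continuous_intros)

lemma slice2: "continuous_on UNIV G \<Longrightarrow> (\<lambda>x. G (x, y)) \<in> Cfun"
  unfolding Cfun_iff by (rule continuous_on_compose2[of UNIV G]) (auto intro!: continuous_intros)

definition rep :: "('a::topological_space \<times> 'a \<Rightarrow> real) \<Rightarrow> bool" where
  "rep g \<longleftrightarrow> (\<exists>xs. set xs \<subseteq> Cfun \<times> Cfun \<and> g = (\<lambda>p. \<Sum>(a,b)\<leftarrow>xs. a (fst p) * b (snd p)))"

lemma cont_fst: "continuous_on UNIV a \<Longrightarrow> continuous_on UNIV (\<lambda>p. a (fst p))"
  by (rule continuous_on_compose2[of UNIV a UNIV fst]) (auto intro: continuous_intros)

lemma cont_snd: "continuous_on UNIV a \<Longrightarrow> continuous_on UNIV (\<lambda>p. a (snd p))"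
  by (rule continuous_on_compose2[of UNIV a UNIV snd]) (auto intro: continuous_intros)

lemma repsum_cont:
  "set xs \<subseteq> Cfun \<times> Cfun \<Longrightarrow> continuous_on UNIV (\<lambda>p. \<Sum>(a,b)\<leftarrow>xs. a (fst p) * b (snd p))"
proof (induction xs)
  case Nil then show ?case by simp
next
  case (Cons ab xs)
  obtain a b where ab: "ab = (a,b)" by force
  have "continuous_on UNIV a" "continuous_on UNIV b" using Cons.prems ab by (auto simp: Cfun_iff)
  then have "continuous_on UNIV (\<lambda>p. a (fst p) * b (snd p))"
    by (intro continuous_intros cont_fst cont_snd)
  then show ?case using Cons ab by (auto intro!: continuous_intros)
qed

lemma rep_cont: "rep g \<Longrightarrow> continuous_on UNIV g"
  unfolding rep_def using repsum_cont by blast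

lemma sumx_Cfun:
  "set xs \<subseteq> Cfun \<times> Cfun \<Longrightarrow> (\<lambda>x. \<Sum>(a,b)\<leftarrow>xs. a x * k b) \<in> Cfun"
proof (induction xs)
  case Nil then show ?case by simp
next
  case (Cons ab xs)
  obtain a b where ab: "ab = (a,b)" by force
  then show ?case using Cons by (auto simp: Cfun_iff intro!: continuous_intros)
qed

lemma sumy_Cfun:
  "set xs \<subseteq> Cfun \<times> Cfun \<Longrightarrow> (\<lambda>y. \<Sum>(a,b)\<leftarrow>xs. k a * b y) \<in> Cfun"
proof (induction xs)
  case Nil then show ?case by simp
next
  case (Cons ab xs)
  obtain a b where ab: "ab = (a,b)" by force
  then show ?case using Cons by (auto simp: Cfun_iff intro!: continuous_intros)
qed

lemma pm_sumx:
  assumes "positive_meas \<mu>"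
  shows "set xs \<subseteq> Cfun \<times> Cfun \<Longrightarrow> \<mu> (\<lambda>x. \<Sum>(a,b)\<leftarrow>xs. a x * k b) = (\<Sum>(a,b)\<leftarrow>xs. \<mu> a * k b)"
proof (induction xs)
  case Nil then show ?case using pm_const[OF assms, of 0] by simp
next
  case (Cons ab xs)
  obtain a b where ab: "ab = (a,b)" by force
  have a: "a \<in> Cfun" using Cons.prems ab by auto
  have ca: "(\<lambda>x. a x * k b) \<in> Cfun" using a by (auto simp: Cfun_iff intro!: continuous_intros)
  have xs: "set xs \<subseteq> Cfun \<times> Cfun" using Cons.prems by auto
  have "\<mu> (\<lambda>x. a x * k b + (\<Sum>(a,b)\<leftarrow>xs. a x * k b)) = \<mu> (\<lambda>x. a x * k b) + \<mu> (\<lambda>x. \<Sum>(a,b)\<leftarrow>xs. a x * k b)"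
    by (rule pm_add[OF assms ca sumx_Cfun[OF xs]])
  moreover have "\<mu> (\<lambda>x. a x * k b) = \<mu> a * k b" using pm_scale[OF assms a, of "k b"] by (simp add: mult.commute)
  ultimately show ?case using Cons ab by simp
qed

lemma pm_sumy:
  assumes "positive_meas \<mu>"
  shows "set xs \<subseteq> Cfun \<times> Cfun \<Longrightarrow> \<mu> (\<lambda>y. \<Sum>(a,b)\<leftarrow>xs. k a * b y) = (\<Sum>(a,b)\<leftarrow>xs. k a * \<mu> b)"
proof (induction xs)
  case Nil then show ?case using pm_const[OF assms, of 0] by simp
next
  case (Cons ab xs)
  obtain a b where ab: "ab = (a,b)" by force
  have b: "b \<in> Cfun" using Cons.prems ab by auto
  have cb: "(\<lambda>y. k a * b y) \<in> Cfun" using b by (auto simp: Cfun_iff intro!: continuous_intros)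
  have xs: "set xs \<subseteq> Cfun \<times> Cfun" using Cons.prems by auto
  have "\<mu> (\<lambda>y. k a * b y + (\<Sum>(a,b)\<leftarrow>xs. k a * b y)) = \<mu> (\<lambda>y. k a * b y) + \<mu> (\<lambda>y. \<Sum>(a,b)\<leftarrow>xs. k a * b y)"
    by (rule pm_add[OF assms cb sumy_Cfun[OF xs]])
  moreover have "\<mu> (\<lambda>y. k a * b y) = k a * \<mu> b" using pm_scale[OF assms b, of "k a"] by simp
  ultimately show ?case using Cons ab by simp
qed

lemma rep_fubini:
  assumes "positive_meas \<mu>" "positive_meas \<nu>" "rep g"
  shows "\<mu> (\<lambda>x. \<nu> (\<lambda>y. g (x,y))) = \<nu> (\<lambda>y. \<mu> (\<lambda>x. g (x,y)))"
proof -
  obtain xs where xs: "set xs \<subseteq> Cfun \<times> Cfun" "g = (\<lambda>p. \<Sum>(a,b)\<leftarrow>xs. a (fst p) * b (snd p))"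
    using assms(3) rep_def by blast
  have 1: "\<nu> (\<lambda>y. g (x,y)) = (\<Sum>(a,b)\<leftarrow>xs. a x * \<nu> b)" for x
    using pm_sumy[OF assms(2) xs(1), of "\<lambda>a. a x"] xs(2) by simp
  have 2: "\<mu> (\<lambda>x. g (x,y)) = (\<Sum>(a,b)\<leftarrow>xs. \<mu> a * b y)" for y
    using pm_sumx[OF assms(1) xs(1), of "\<lambda>b. b y"] xs(2) by simp
  show ?thesis unfolding 1 2 using pm_sumx[OF assms(1) xs(1), of \<nu>] pm_sumy[OF assms(2) xs(1), of \<mu>]
    by simp
qed

lemma sep:
  assumes "compact (UNIV::'a::t2_space set)" "(x::'a) \<noteq> y"
  shows "\<exists>f. continuous_on UNIV f \<and> (f x::real) \<noteq> f y"
proof -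
  have hs: "Hausdorff_space (euclidean :: 'a topology)"
    unfolding Hausdorff_space_def by (simp add: separation_t2 disjnt_def)
  have "normal_space (euclidean :: 'a topology)"
    using assms(1) hs compact_Hausdorff_or_regular_imp_normal_space
    by (metis compact_space_def compactin_euclidean_iff topspace_euclidean)
  then obtain f where f: "continuous_map euclidean (top_of_set {0..1::real}) f" "f ` {x} \<subseteq> {0}" "f ` {y} \<subseteq> {1}"
    using Urysohn_lemma[of euclidean "{x}" "{y}" 0 1] assms(2) by (auto simp: disjnt_def)
  then have "continuous_on UNIV f"
    by (metis continuous_map_in_subtopology continuous_map_iff_continuous2)
  then show ?thesis using f by auto
qed

lemma rep_const: "rep (\<lambda>p. c)"
  unfolding rep_def by (rule exI[of _ "[(\<lambda>_. c, \<lambda>_. 1)]"]) auto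

lemma rep_add: "rep f \<Longrightarrow> rep g \<Longrightarrow> rep (\<lambda>p. f p + g p)"
  unfolding rep_def
proof (elim exE conjE)
  fix xs ys assume "set xs \<subseteq> Cfun \<times> Cfun" "f = (\<lambda>p. \<Sum>(a,b)\<leftarrow>xs. a (fst p) * b (snd p))"
    "set ys \<subseteq> Cfun \<times> Cfun" "g = (\<lambda>p. \<Sum>(a,b)\<leftarrow>ys. a (fst p) * b (snd p))"
  then show "\<exists>zs. set zs \<subseteq> Cfun \<times> Cfun \<and> (\<lambda>p. f p + g p) = (\<lambda>p. \<Sum>(a,b)\<leftarrow>zs. a (fst p) * b (snd p))"
    by (intro exI[of _ "xs @ ys"]) (simp add: fun_eq_iff)
qed

definition mulL where
  "mulL xs ys = concat (map (\<lambda>(a,b). map (\<lambda>(c,d). (\<lambda>x. a x * c x, \<lambda>y. b y * d y)) ys) xs)"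

lemma mulL_eq:
  "(\<Sum>(a,b)\<leftarrow>xs. a u * b v::real) * (\<Sum>(a,b)\<leftarrow>ys. a u * b v) = (\<Sum>(a,b)\<leftarrow>mulL xs ys. a u * b v)"
proof (induction xs)
  case Nil then show ?case by (simp add: mulL_def)
next
  case (Cons ab xs)
  obtain a b where ab: "ab = (a,b)" by force
  have "(\<Sum>(c,d)\<leftarrow>ys. (a u * c u) * (b v * d v)) = (a u * b v) * (\<Sum>(c,d)\<leftarrow>ys. c u * d v)"
    by (induction ys) (auto simp: algebra_simps)
  moreover have "(\<Sum>(a,b)\<leftarrow>mulL (ab#xs) ys. a u * b v) = (\<Sum>(c,d)\<leftarrow>ys. (a u * c u) * (b v * d v)) + (\<Sum>(a,b)\<leftarrow>mulL xs ys. a u * b v)"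
    by (simp add: mulL_def ab o_def case_prod_unfold)
  ultimately show ?case using Cons.IH ab by (simp add: distrib_right)
qed

lemma mulL_set:
  assumes "set xs \<subseteq> Cfun \<times> Cfun" "set ys \<subseteq> Cfun \<times> Cfun"
  shows "set (mulL xs ys) \<subseteq> Cfun \<times> Cfun"
proof
  fix z assume "z \<in> set (mulL xs ys)"
  then obtain a b c d where abcd: "(a,b) \<in> set xs" "(c,d) \<in> set ys" "z = (\<lambda>x. a x * c x, \<lambda>y. b y * d y)"
    unfolding mulL_def by auto
  have "a \<in> Cfun" "b \<in> Cfun" "c \<in> Cfun" "d \<in> Cfun" using abcd(1,2) assms by auto
  then show "z \<in> Cfun \<times> Cfun" using abcd(3) by (auto simp: Cfun_iff intro!: continuous_intros)
qed

lemma rep_mult: "rep f \<Longrightarrow> rep g \<Longrightarrow> rep (\<lambda>p. f p * g p)"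
  unfolding rep_def
proof (elim exE conjE)
  fix xs ys assume "set xs \<subseteq> Cfun \<times> Cfun" "f = (\<lambda>p. \<Sum>(a,b)\<leftarrow>xs. a (fst p) * b (snd p))"
    "set ys \<subseteq> Cfun \<times> Cfun" "g = (\<lambda>p. \<Sum>(a,b)\<leftarrow>ys. a (fst p) * b (snd p))"
  then show "\<exists>zs. set zs \<subseteq> Cfun \<times> Cfun \<and> (\<lambda>p. f p * g p) = (\<lambda>p. \<Sum>(a,b)\<leftarrow>zs. a (fst p) * b (snd p))"
    by (intro exI[of _ "mulL xs ys"]) (auto simp: mulL_set mulL_eq)
qed

lemma rep_sep:
  assumes "compact (UNIV::'a::t2_space set)" "(p::'a\<times>'a) \<noteq> q"
  shows "\<exists>g. rep g \<and> g p \<noteq> g q"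
proof (cases "fst p = fst q")
  case True
  then have "snd p \<noteq> snd q" using assms(2) by (metis prod.expand)
  then obtain f where f: "continuous_on UNIV f" "(f (snd p)::real) \<noteq> f (snd q)" using sep assms(1) by blast
  have "rep (\<lambda>r. (\<Sum>(a,b)\<leftarrow>[(\<lambda>_. 1, f)]. a (fst r) * b (snd r)))"
    unfolding rep_def using f by (intro exI[of _ "[(\<lambda>_. 1, f)]"]) (auto simp: Cfun_iff)
  then show ?thesis using f by (intro exI[of _ "\<lambda>r. (\<Sum>(a,b)\<leftarrow>[(\<lambda>_. 1, f)]. a (fst r) * b (snd r))"]) auto
next
  case False
  then obtain f where f: "continuous_on UNIV f" "(f (fst p)::real) \<noteq> f (fst q)" using sep assms(1) by blast
  have "rep (\<lambda>r. (\<Sum>(a,b)\<leftarrow>[(f, \<lambda>_. 1)]. a (fst r) * b (snd r)))"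
    unfolding rep_def using f by (intro exI[of _ "[(f, \<lambda>_. 1)]"]) (auto simp: Cfun_iff)
  then show ?thesis using f by (intro exI[of _ "\<lambda>r. (\<Sum>(a,b)\<leftarrow>[(f, \<lambda>_. 1)]. a (fst r) * b (snd r))"]) auto
qed

lemma rep_approx:
  assumes "compact (UNIV::'a::t2_space set)" "continuous_on UNIV (G::'a\<times>'a \<Rightarrow> real)" "\<epsilon> > 0"
  shows "\<exists>g. rep g \<and> (\<forall>p. \<bar>G p - g p\<bar> < \<epsilon>)"
proof -
  have c: "compact (UNIV :: ('a\<times>'a) set)"
    using compact_Times[OF assms(1) assms(1)] by simp
  have a: "\<And>f g::'a\<times>'a\<Rightarrow>real. rep f \<and> rep g \<Longrightarrow> rep (\<lambda>x. f x + g x)" using rep_add by blast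
  have m: "\<And>f g::'a\<times>'a\<Rightarrow>real. rep f \<and> rep g \<Longrightarrow> rep (\<lambda>x. f x * g x)" using rep_mult by blast
  have s: "\<And>x y::'a\<times>'a. x \<in> UNIV \<and> y \<in> UNIV \<and> x \<noteq> y \<Longrightarrow> \<exists>f. rep f \<and> f x \<noteq> f y"
    using rep_sep[OF assms(1)] by blast
  show ?thesis
    using Stone_Weierstrass_HOL[where S=UNIV and P=rep and f=G and e=\<epsilon>, OF c rep_const rep_cont a m s assms(2,3)] by blast
qed




lemma rep_inner_Cfun:
  assumes "positive_meas \<nu>" "rep g"
  shows "(\<lambda>x. \<nu> (\<lambda>y. g (x,y))) \<in> Cfun"
proof -
  obtain xs where xs: "set xs \<subseteq> Cfun \<times> Cfun" "g = (\<lambda>p. \<Sum>(a,b)\<leftarrow>xs. a (fst p) * b (snd p))"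
    using assms(2) rep_def by blast
  have 1: "\<nu> (\<lambda>y. g (x,y)) = (\<Sum>(a,b)\<leftarrow>xs. a x * \<nu> b)" for x
    using pm_sumy[OF assms(1) xs(1), of "\<lambda>a. a x"] xs(2) by simp
  show ?thesis unfolding 1 by (rule sumx_Cfun[OF xs(1)])
qed

lemma inner_Cfun:
  assumes "compact (UNIV::'a::t2_space set)" "positive_meas \<nu>" "continuous_on UNIV (G::'a\<times>'a\<Rightarrow>real)"
  shows "(\<lambda>x. \<nu> (\<lambda>y. G (x,y))) \<in> Cfun"
  unfolding Cfun_iff
proof (rule cont_approx)
  fix \<epsilon> :: real assume e: "\<epsilon> > 0"
  define c where "c = \<nu> (\<lambda>x. 1) + 1"
  have c: "c > 0" "\<nu> (\<lambda>x. 1) \<le> c" using pm_one_nonneg[OF assms(2)] by (auto simp: c_def)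
  obtain g where g: "rep g" "\<forall>p. \<bar>G p - g p\<bar> < \<epsilon> / c"
    using rep_approx[OF assms(1,3), of "\<epsilon>/c"] e c by auto
  have gc: "continuous_on UNIV g" using rep_cont g(1) by blast
  have d: "continuous_on UNIV (\<lambda>p. G p - g p)" using gc assms(3) by (auto intro!: continuous_intros)
  show "\<exists>h'. continuous_on UNIV h' \<and> (\<forall>x. \<bar>\<nu> (\<lambda>y. G (x, y)) - h' x\<bar> \<le> \<epsilon>)"
  proof (intro exI conjI allI)
    show "continuous_on UNIV (\<lambda>x. \<nu> (\<lambda>y. g (x,y)))" using rep_inner_Cfun[OF assms(2) g(1)] by (simp add: Cfun_iff)
    fix x
    have "\<nu> (\<lambda>y. G (x, y)) - \<nu> (\<lambda>y. g (x,y)) = \<nu> (\<lambda>y. G (x, y) - g (x,y))"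
      using pm_diff[OF assms(2) slice1[OF assms(3)] slice1[OF gc]] by simp
    also have "\<bar>\<dots>\<bar> \<le> (\<epsilon> / c) * \<nu> (\<lambda>x. 1)"
      using pm_bound[OF assms(2) slice1[OF d, of x], of "\<epsilon>/c"] g(2) by (simp add: less_imp_le)
    also have "\<dots> \<le> (\<epsilon> / c) * c" using c e by (intro mult_left_mono) auto
    also have "\<dots> = \<epsilon>" using c by simp
    finally show "\<bar>\<nu> (\<lambda>y. G (x, y)) - \<nu> (\<lambda>y. g (x,y))\<bar> \<le> \<epsilon>" .
  qed
qed

lemma swap_cont: "continuous_on UNIV (G::'a::topological_space\<times>'a\<Rightarrow>real) \<Longrightarrow> continuous_on UNIV (\<lambda>p. G (snd p, fst p))"
  by (rule continuous_on_compose2[of UNIV G]) (auto intro!: continuous_intros)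

lemma inner_Cfun2:
  assumes "compact (UNIV::'a::t2_space set)" "positive_meas \<mu>" "continuous_on UNIV (G::'a\<times>'a\<Rightarrow>real)"
  shows "(\<lambda>y. \<mu> (\<lambda>x. G (x,y))) \<in> Cfun"
  using inner_Cfun[OF assms(1,2) swap_cont[OF assms(3)]] by simp

lemma fubini:
  assumes "compact (UNIV::'a::t2_space set)" "positive_meas \<mu>" "positive_meas \<nu>"
    "continuous_on UNIV (G::'a\<times>'a\<Rightarrow>real)"
  shows "\<mu> (\<lambda>x. \<nu> (\<lambda>y. G (x,y))) = \<nu> (\<lambda>y. \<mu> (\<lambda>x. G (x,y)))"
proof -
  define C where "C = 2 * (\<mu> (\<lambda>x. 1) * \<nu> (\<lambda>x. 1))"
  have C: "C \<ge> 0" using pm_one_nonneg[OF assms(2)] pm_one_nonneg[OF assms(3)] by (simp add: C_def)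
  have "\<bar>\<mu> (\<lambda>x. \<nu> (\<lambda>y. G (x,y))) - \<nu> (\<lambda>y. \<mu> (\<lambda>x. G (x,y)))\<bar> \<le> \<epsilon> * C" if e: "\<epsilon> > 0" for \<epsilon>
  proof -
    obtain g where g: "rep g" "\<forall>p. \<bar>G p - g p\<bar> < \<epsilon>"
      using rep_approx[OF assms(1,4) e] by auto
    have gc: "continuous_on UNIV g" using rep_cont g(1) by blast
    have d: "continuous_on UNIV (\<lambda>p. G p - g p)" using gc assms(4) by (auto intro!: continuous_intros)
    have b1: "\<bar>\<nu> (\<lambda>y. G (x,y)) - \<nu> (\<lambda>y. g (x,y))\<bar> \<le> \<epsilon> * \<nu> (\<lambda>x. 1)" for x
    proof -
      have "\<nu> (\<lambda>y. G (x, y)) - \<nu> (\<lambda>y. g (x,y)) = \<nu> (\<lambda>y. G (x, y) - g (x,y))"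
        using pm_diff[OF assms(3) slice1[OF assms(4)] slice1[OF gc]] by simp
      also have "\<bar>\<dots>\<bar> \<le> \<epsilon> * \<nu> (\<lambda>x. 1)"
        using pm_bound[OF assms(3) slice1[OF d, of x], of \<epsilon>] g(2) by (simp add: less_imp_le)
      finally show ?thesis .
    qed
    have b2: "\<bar>\<mu> (\<lambda>x. G (x,y)) - \<mu> (\<lambda>x. g (x,y))\<bar> \<le> \<epsilon> * \<mu> (\<lambda>x. 1)" for y
    proof -
      have "\<mu> (\<lambda>x. G (x, y)) - \<mu> (\<lambda>x. g (x,y)) = \<mu> (\<lambda>x. G (x, y) - g (x,y))"
        using pm_diff[OF assms(2) slice2[OF assms(4)] slice2[OF gc]] by simp
      also have "\<bar>\<dots>\<bar> \<le> \<epsilon> * \<mu> (\<lambda>x. 1)"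
        using pm_bound[OF assms(2) slice2[OF d, of y], of \<epsilon>] g(2) by (simp add: less_imp_le)
      finally show ?thesis .
    qed
    have i1: "(\<lambda>x. \<nu> (\<lambda>y. G (x,y))) \<in> Cfun" "(\<lambda>x. \<nu> (\<lambda>y. g (x,y))) \<in> Cfun"
      using inner_Cfun[OF assms(1,3)] assms(4) gc by auto
    have i2: "(\<lambda>y. \<mu> (\<lambda>x. G (x,y))) \<in> Cfun" "(\<lambda>y. \<mu> (\<lambda>x. g (x,y))) \<in> Cfun"
      using inner_Cfun2[OF assms(1,2)] assms(4) gc by auto
    have dd1: "(\<lambda>x. \<nu> (\<lambda>y. G (x,y)) - \<nu> (\<lambda>y. g (x,y))) \<in> Cfun"
      using i1 by (auto simp: Cfun_iff intro!: continuous_intros)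
    have dd2: "(\<lambda>y. \<mu> (\<lambda>x. G (x,y)) - \<mu> (\<lambda>x. g (x,y))) \<in> Cfun"
      using i2 by (auto simp: Cfun_iff intro!: continuous_intros)
    have e1: "\<bar>\<mu> (\<lambda>x. \<nu> (\<lambda>y. G (x,y))) - \<mu> (\<lambda>x. \<nu> (\<lambda>y. g (x,y)))\<bar> \<le> (\<epsilon> * \<nu> (\<lambda>x. 1)) * \<mu> (\<lambda>x. 1)"
      using pm_diff[OF assms(2) i1] pm_bound[OF assms(2) dd1 b1] by simp
    have e2: "\<bar>\<nu> (\<lambda>y. \<mu> (\<lambda>x. G (x,y))) - \<nu> (\<lambda>y. \<mu> (\<lambda>x. g (x,y)))\<bar> \<le> (\<epsilon> * \<mu> (\<lambda>x. 1)) * \<nu> (\<lambda>x. 1)"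
      using pm_diff[OF assms(3) i2] pm_bound[OF assms(3) dd2 b2] by simp
    have eq: "\<mu> (\<lambda>x. \<nu> (\<lambda>y. g (x,y))) = \<nu> (\<lambda>y. \<mu> (\<lambda>x. g (x,y)))"
      by (rule rep_fubini[OF assms(2,3) g(1)])
    show ?thesis using e1 e2 eq unfolding C_def by (simp add: algebra_simps abs_le_iff)
  qed
  from small_zero[OF C this] show ?thesis by simp
qed




lemma mk_pm:
  assumes lin: "\<And>f g a b. f \<in> Cfun \<Longrightarrow> g \<in> Cfun \<Longrightarrow> L (\<lambda>x. a * f x + b * g x) = a * L f + b * L g"
    and pos: "\<And>f. f \<in> Cfun \<Longrightarrow> (\<forall>x. 0 \<le> f x) \<Longrightarrow> 0 \<le> L f"
  shows "positive_meas L"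
  unfolding positive_meas_def meas_def
proof (intro conjI ballI allI impI exI[of _ "L (\<lambda>x. 1)"])
  fix f :: "'a \<Rightarrow> real" assume f: "f \<in> Cfun" and b: "\<forall>x. \<bar>f x\<bar> \<le> 1"
  have p1: "0 \<le> L (\<lambda>x. 1 * (\<lambda>x. 1) x + (-1) * f x)" using f b
    by (intro pos) (auto simp: Cfun_iff abs_le_iff intro!: continuous_intros)
  have p2: "0 \<le> L (\<lambda>x. 1 * (\<lambda>x. 1) x + 1 * f x)" using f b
    by (intro pos) (auto simp: Cfun_iff abs_le_iff intro!: continuous_intros, smt)
  have e1: "L (\<lambda>x. 1 * (\<lambda>x. 1) x + (-1) * f x) = 1 * L (\<lambda>x. 1) + (-1) * L f" by (rule lin[OF const_Cfun f])
  have e2: "L (\<lambda>x. 1 * (\<lambda>x. 1) x + 1 * f x) = 1 * L (\<lambda>x. 1) + 1 * L f" by (rule lin[OF const_Cfun f])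
  from p1 p2 show "\<bar>L f\<bar> \<le> L (\<lambda>x. 1)" unfolding e1 e2 by linarith
qed (use lin pos in auto)

context
  fixes pc :: "'a::t2_space \<Rightarrow> 'a \<Rightarrow> (('a \<Rightarrow> real) \<Rightarrow> real)" and e :: 'a and iv :: "'a \<Rightarrow> 'a"
  assumes H: "hypergroup pc e iv"
begin

lemma hcomp: "compact (UNIV::'a set)" using H by (simp add: hypergroup_def)
lemma hpm: "positive_meas (pc x y)" using H by (simp add: hypergroup_def prob_meas_def)
lemma hone: "pc x y (\<lambda>_. 1) = 1" using H by (simp add: hypergroup_def prob_meas_def)
lemma hjoint: "f \<in> Cfun \<Longrightarrow> continuous_on UNIV (\<lambda>p. pc (fst p) (snd p) f)"
  using H by (simp add: hypergroup_def)
lemma hassoc: "f \<in> Cfun \<Longrightarrow> pc x y (\<lambda>u. pc u z f) = pc y z (\<lambda>v. pc x v f)"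
  using H by (simp add: hypergroup_def)
lemma hid: "f \<in> Cfun \<Longrightarrow> pc e x f = f x" using H by (simp add: hypergroup_def)
lemma hsupp: "e \<in> msupp (pc x (iv x))" using H by (simp add: hypergroup_def)

lemma hL: "f \<in> Cfun \<Longrightarrow> (\<lambda>y. pc x y f) \<in> Cfun"
  using slice1[OF hjoint, of f x] by simp
lemma hR: "f \<in> Cfun \<Longrightarrow> (\<lambda>x. pc x y f) \<in> Cfun"
  using slice2[OF hjoint, of f y] by simp

lemma convC: "positive_meas \<nu> \<Longrightarrow> f \<in> Cfun \<Longrightarrow> (\<lambda>x. \<nu> (\<lambda>y. pc x y f)) \<in> Cfun"
  using inner_Cfun[OF hcomp _ hjoint, of \<nu> f] by simp
lemma convC2: "positive_meas \<mu> \<Longrightarrow> f \<in> Cfun \<Longrightarrow> (\<lambda>y. \<mu> (\<lambda>x. pc x y f)) \<in> Cfun"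
  using inner_Cfun2[OF hcomp _ hjoint, of \<mu> f] by simp

lemma fub: "positive_meas \<mu> \<Longrightarrow> positive_meas \<nu> \<Longrightarrow> f \<in> Cfun \<Longrightarrow>
   \<mu> (\<lambda>x. \<nu> (\<lambda>y. pc x y f)) = \<nu> (\<lambda>y. \<mu> (\<lambda>x. pc x y f))"
  using fubini[OF hcomp _ _ hjoint, of \<mu> \<nu> f] by simp

lemma pc_lin: "f \<in> Cfun \<Longrightarrow> g \<in> Cfun \<Longrightarrow> pc x y (\<lambda>z. a * f z + b * g z) = a * pc x y f + b * pc x y g"
  using pm_lin[OF hpm] by blast

lemma conv_pm:
  assumes "positive_meas \<mu>" "positive_meas \<nu>"
  shows "positive_meas (mconv pc \<mu> \<nu>)"
proof (rule mk_pm)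
  fix f g :: "'a \<Rightarrow> real" and a b :: real assume f: "f \<in> Cfun" and g: "g \<in> Cfun"
  have "mconv pc \<mu> \<nu> (\<lambda>x. a * f x + b * g x) = \<mu> (\<lambda>x. \<nu> (\<lambda>y. a * pc x y f + b * pc x y g))"
    unfolding mconv_def using pc_lin[OF f g] by simp
  also have "\<dots> = \<mu> (\<lambda>x. a * \<nu> (\<lambda>y. pc x y f) + b * \<nu> (\<lambda>y. pc x y g))"
    using pm_lin[OF assms(2) hL[OF f] hL[OF g]] by simp
  also have "\<dots> = a * mconv pc \<mu> \<nu> f + b * mconv pc \<mu> \<nu> g"
    unfolding mconv_def using pm_lin[OF assms(1) convC[OF assms(2) f] convC[OF assms(2) g]] by simp
  finally show "mconv pc \<mu> \<nu> (\<lambda>x. a * f x + b * g x) = a * mconv pc \<mu> \<nu> f + b * mconv pc \<mu> \<nu> g" .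
next
  fix f :: "'a \<Rightarrow> real" assume f: "f \<in> Cfun" and p: "\<forall>x. 0 \<le> f x"
  have "0 \<le> pc x y f" for x y using pm_pos[OF hpm f] p by auto
  then have "0 \<le> \<nu> (\<lambda>y. pc x y f)" for x using pm_pos[OF assms(2) hL[OF f]] by auto
  then show "0 \<le> mconv pc \<mu> \<nu> f" unfolding mconv_def using pm_pos[OF assms(1) convC[OF assms(2) f]] by auto
qed

lemma conv_one:
  assumes "positive_meas \<mu>" "positive_meas \<nu>"
  shows "mconv pc \<mu> \<nu> (\<lambda>_. 1) = \<mu> (\<lambda>_. 1) * \<nu> (\<lambda>_. 1)"
  unfolding mconv_def hone using pm_const[OF assms(1), of "\<nu> (\<lambda>_. 1)"] by simp

lemma conv_assoc:
  assumes "positive_meas \<mu>" "positive_meas \<nu>" "positive_meas \<rho>" "f \<in> Cfun"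
  shows "mconv pc (mconv pc \<mu> \<nu>) \<rho> f = mconv pc \<mu> (mconv pc \<nu> \<rho>) f"
proof -
  have "pc x y (\<lambda>u. \<rho> (\<lambda>z. pc u z f)) = \<rho> (\<lambda>z. pc y z (\<lambda>v. pc x v f))" for x y
    using fub[OF hpm assms(3) assms(4), of x y] hassoc[OF assms(4)] by simp
  then show ?thesis unfolding mconv_def by simp
qed

lemma maxsupp:
  fixes \<mu> :: "('a \<Rightarrow> real) \<Rightarrow> real"
  assumes "positive_meas \<mu>" "\<mu> (\<lambda>_. 1) = 1" "g \<in> Cfun" "\<And>x. g x \<le> M" "\<mu> g = M" "z \<in> msupp \<mu>"
  shows "g z = M"
proof (rule ccontr)
  assume "g z \<noteq> M"
  then have lt: "g z < M" using assms(4) le_less by blast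
  define \<delta> where "\<delta> = (M - g z) / 2"
  have dpos: "\<delta> > 0" using lt by (simp add: \<delta>_def)
  define U where "U = {w. g w < M - \<delta>}"
  have "open U" unfolding U_def using assms(3)
    by (intro open_Collect_less) (auto simp: Cfun_iff intro!: continuous_intros)
  moreover have "z \<in> U" using lt by (simp add: U_def \<delta>_def field_simps)
  ultimately obtain f where f: "f \<in> Cfun" "\<forall>y. y \<notin> U \<longrightarrow> f y = 0" "\<mu> f \<noteq> 0"
    using assms(6) unfolding msupp_def by blast
  obtain B where B: "\<forall>x. \<bar>f x\<bar> \<le> B" using bounded_Cfun[OF hcomp f(1)] by blast
  have B0: "B \<ge> 0" using B by (meson abs_ge_zero order_trans)
  define k where "k = B / \<delta>"
  have k0: "k \<ge> 0" using B0 dpos by (simp add: k_def)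
  have bnd: "\<bar>f w\<bar> \<le> k * (M - g w)" for w
  proof (cases "w \<in> U")
    case True
    then have "M - g w > \<delta>" by (simp add: U_def)
    then have "k * \<delta> \<le> k * (M - g w)" using k0 by (intro mult_left_mono) auto
    moreover have "k * \<delta> = B" using dpos by (simp add: k_def)
    ultimately show ?thesis using B by smt
  next
    case False
    then show ?thesis using f(2) k0 assms(4)[of w] by simp
  qed
  have kC: "(\<lambda>w. k * (M - g w)) \<in> Cfun" using assms(3) by (auto simp: Cfun_iff intro!: continuous_intros)
  have "\<mu> (\<lambda>w. k * (M - g w)) = k * (\<mu> (\<lambda>w. M) - \<mu> g)"
  proof -
    have "(\<lambda>w. M - g w) \<in> Cfun" using assms(3) by (auto simp: Cfun_iff intro!: continuous_intros)
    then show ?thesis using pm_scale[OF assms(1), of "\<lambda>w. M - g w" k] pm_diff[OF assms(1) const_Cfun assms(3)]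
      by simp
  qed
  also have "\<dots> = 0" using pm_const[OF assms(1), of M] assms(2,5) by simp
  finally have z: "\<mu> (\<lambda>w. k * (M - g w)) = 0" .
  have "\<mu> f \<le> 0" using pm_mono[OF assms(1) f(1) kC] bnd z by (metis abs_le_D1)
  moreover have "\<mu> (\<lambda>w. - f w) \<le> 0" using pm_mono[OF assms(1) _ kC, of "\<lambda>w. - f w"] bnd z f(1)
    by (metis abs_le_D2 Cfun_iff continuous_on_minus)
  ultimately show False using pm_neg[OF assms(1) f(1)] f(3) by simp
qed

end



context
  fixes pc :: "'a::t2_space \<Rightarrow> 'a \<Rightarrow> (('a \<Rightarrow> real) \<Rightarrow> real)" and e :: 'a and iv :: "'a \<Rightarrow> 'a"
  assumes H: "hypergroup pc e iv"
begin

lemma mpow_Suc: "k \<ge> 1 \<Longrightarrow> mpow pc \<sigma> (Suc k) = mconv pc (mpow pc \<sigma> k) \<sigma>"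
  by (cases k) auto

lemma mpow_pm:
  assumes "positive_meas \<sigma>" "\<sigma> (\<lambda>_. 1) = 1"
  shows "k \<ge> 1 \<Longrightarrow> positive_meas (mpow pc \<sigma> k) \<and> mpow pc \<sigma> k (\<lambda>_. 1) = 1"
proof (induction k)
  case 0 then show ?case by simp
next
  case (Suc k)
  show ?case
  proof (cases "k = 0")
    case True then show ?thesis using assms by simp
  next
    case False
    then have k: "k \<ge> 1" by simp
    then show ?thesis using Suc.IH conv_pm[OF H, of "mpow pc \<sigma> k" \<sigma>] conv_one[OF H, of "mpow pc \<sigma> k" \<sigma>] assms
      mpow_Suc[OF k] by simp
  qed
qed

lemma left_pow:
  assumes "positive_meas \<sigma>" "\<sigma> (\<lambda>_. 1) = 1"
  shows "k \<ge> 1 \<Longrightarrow> f \<in> Cfun \<Longrightarrow> mconv pc \<sigma> (mpow pc \<sigma> k) f = mpow pc \<sigma> (Suc k) f"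
proof (induction k arbitrary: f)
  case 0 then show ?case by simp
next
  case (Suc k)
  show ?case
  proof (cases "k = 0")
    case True then show ?thesis by simp
  next
    case False
    then have k: "k \<ge> 1" by simp
    have pk: "positive_meas (mpow pc \<sigma> k)" using mpow_pm[OF assms k] by simp
    have Tf: "(\<lambda>x. \<sigma> (\<lambda>y. pc x y f)) \<in> Cfun" using convC[OF H assms(1) Suc.prems(2)] .
    have "mconv pc \<sigma> (mpow pc \<sigma> (Suc k)) f = mconv pc \<sigma> (mconv pc (mpow pc \<sigma> k) \<sigma>) f"
      using mpow_Suc[OF k] by simp
    also have "\<dots> = mconv pc (mconv pc \<sigma> (mpow pc \<sigma> k)) \<sigma> f"
      using conv_assoc[OF H assms(1) pk assms(1) Suc.prems(2)] by simp
    also have "\<dots> = mconv pc \<sigma> (mpow pc \<sigma> k) (\<lambda>x. \<sigma> (\<lambda>y. pc x y f))"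
      by (simp add: mconv_def)
    also have "\<dots> = mpow pc \<sigma> (Suc k) (\<lambda>x. \<sigma> (\<lambda>y. pc x y f))"
      using Suc.IH[OF k Tf] .
    also have "\<dots> = mpow pc \<sigma> (Suc (Suc k)) f"
      using mpow_Suc[of "Suc k" \<sigma>] by (simp add: mconv_def)
    finally show ?thesis .
  qed
qed

end



context
  fixes pc :: "'a::t2_space \<Rightarrow> 'a \<Rightarrow> (('a \<Rightarrow> real) \<Rightarrow> real)" and e :: 'a and iv :: "'a \<Rightarrow> 'a"
  assumes H: "hypergroup pc e iv"
begin

lemma pc_le:
  assumes "g \<in> Cfun" "\<And>z. g z \<le> M"
  shows "pc x y g \<le> M"
  using pm_mono[OF hpm[OF H] assms(1) const_Cfun, of M x y] assms(2) pm_const[OF hpm[OF H], of x y M] hone[OF H]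
  by simp

lemma main:
  fixes \<sigma> \<sigma>0 :: "('a \<Rightarrow> real) \<Rightarrow> real"
  assumes S: "prob_meas \<sigma>" and ND: "nondegenerate pc \<sigma>"
    and W: "weakstar_cluster (\<lambda>n. \<lambda>f. (1 / real n) * (\<Sum>k=1..n. mpow pc \<sigma> k f)) \<sigma>0"
  shows "normalized_haar pc \<sigma>0"
proof -
  have pmS: "positive_meas \<sigma>" and S1: "\<sigma> (\<lambda>_. 1) = 1" using S by (auto simp: prob_meas_def)
  have powpm: "positive_meas (mpow pc \<sigma> k)" and pow1: "mpow pc \<sigma> k (\<lambda>_. 1) = 1" if "k \<ge> 1" for k
    using mpow_pm[OF H pmS S1 that] by auto
  define s where "s = (\<lambda>n. \<lambda>f. (1 / real n) * (\<Sum>k=1..n. mpow pc \<sigma> k f))"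
  have meas0: "meas \<sigma>0" using W by (simp add: weakstar_cluster_def)
  have clus: "\<exists>n\<ge>N. n \<ge> 1 \<and> (\<forall>f\<in>F. \<bar>s n f - \<sigma>0 f\<bar> < \<epsilon>)"
    if "finite F" "F \<subseteq> Cfun" "\<epsilon> > 0" for F \<epsilon> N
    using W that unfolding weakstar_cluster_def s_def by blast
  have s_nonneg: "0 \<le> s n f" if "f \<in> Cfun" "\<And>x. 0 \<le> f x" for n f
  proof -
    have "0 \<le> mpow pc \<sigma> k f" if "k \<in> {1..n}" for k
      using pm_pos[OF powpm] that \<open>f \<in> Cfun\<close> \<open>\<And>x. 0 \<le> f x\<close> by auto
    then show ?thesis unfolding s_def by (intro mult_nonneg_nonneg sum_nonneg) auto
  qed
  have pos0: "0 \<le> \<sigma>0 f" if f: "f \<in> Cfun" "\<And>x. 0 \<le> f x" for f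
  proof (rule ccontr)
    assume "\<not> 0 \<le> \<sigma>0 f"
    then obtain n where "\<bar>s n f - \<sigma>0 f\<bar> < - \<sigma>0 f" using clus[of "{f}" "- \<sigma>0 f" 0] f by auto
    then show False using s_nonneg[OF f, of n] by (simp add: abs_less_iff)
  qed
  have pm0: "positive_meas \<sigma>0" using meas0 pos0 by (auto simp: positive_meas_def)
  have s_one: "s n (\<lambda>_. 1) = 1" if "n \<ge> 1" for n
    using pow1 that unfolding s_def by simp
  have one0: "\<sigma>0 (\<lambda>_. 1) = 1"
  proof -
    have "\<bar>1 - \<sigma>0 (\<lambda>_. 1)\<bar> \<le> \<epsilon> * 1" if ep: "\<epsilon> > 0" for \<epsilon>
    proof -
      obtain n where "n \<ge> 1" "\<bar>s n (\<lambda>_. 1) - \<sigma>0 (\<lambda>_. 1)\<bar> < \<epsilon>"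
        using clus[of "{\<lambda>_. 1}" \<epsilon> 0] ep by auto
      then show ?thesis using s_one by simp
    qed
    from small_zero[OF _ this] show ?thesis by simp
  qed
  have inv: "\<sigma>0 (\<lambda>y. \<sigma> (\<lambda>x. pc x y f)) = \<sigma>0 f" if f: "f \<in> Cfun" for f
  proof -
    define g where "g = (\<lambda>y. \<sigma> (\<lambda>x. pc x y f))"
    have gC: "g \<in> Cfun" unfolding g_def by (rule convC2[OF H pmS f])
    have pg: "mpow pc \<sigma> k g = mpow pc \<sigma> (Suc k) f" if "k \<ge> 1" for k
    proof -
      have "mpow pc \<sigma> k g = \<sigma> (\<lambda>x. mpow pc \<sigma> k (\<lambda>y. pc x y f))"
        unfolding g_def using fub[OF H pmS powpm[OF that] f] by simp
      also have "\<dots> = mconv pc \<sigma> (mpow pc \<sigma> k) f" by (simp add: mconv_def)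
      also have "\<dots> = mpow pc \<sigma> (Suc k) f" using left_pow[OF H pmS S1 that f] .
      finally show ?thesis .
    qed
    obtain B where B: "\<forall>x. \<bar>f x\<bar> \<le> B" using bounded_Cfun[OF hcomp[OF H] f] by blast
    have B0: "B \<ge> 0" using B by (meson abs_ge_zero order_trans)
    have bk: "\<bar>mpow pc \<sigma> k f\<bar> \<le> B" if "k \<ge> 1" for k
      using pm_bound[OF powpm[OF that] f, of B] B pow1[OF that] by simp
    have diff: "\<bar>s n g - s n f\<bar> \<le> 2 * B / real n" if n: "n \<ge> 1" for n
    proof -
      have "s n g - s n f = (1 / real n) * (\<Sum>k=1..n. mpow pc \<sigma> (Suc k) f - mpow pc \<sigma> k f)"
        unfolding s_def using pg by (simp add: sum_subtractf right_diff_distrib)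
      also have "(\<Sum>k=1..n. mpow pc \<sigma> (Suc k) f - mpow pc \<sigma> k f) = mpow pc \<sigma> (Suc n) f - mpow pc \<sigma> 1 f"
        by (rule sum_Suc_diff) (use n in simp)
      finally have eq: "s n g - s n f = (mpow pc \<sigma> (Suc n) f - mpow pc \<sigma> 1 f) / real n" by simp
      have "\<bar>mpow pc \<sigma> (Suc n) f - mpow pc \<sigma> 1 f\<bar> \<le> 2 * B"
        using bk[of "Suc n"] bk[of 1] by simp
      then show ?thesis unfolding eq using n by (simp add: divide_right_mono)
    qed
    have "\<bar>\<sigma>0 g - \<sigma>0 f\<bar> \<le> \<epsilon> * 3" if ep: "\<epsilon> > 0" for \<epsilon>
    proof -
      obtain N :: nat where N: "2 * B / \<epsilon> < real N" using reals_Archimedean2 by blast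
      obtain n where n: "n \<ge> N" "n \<ge> 1" "\<bar>s n f - \<sigma>0 f\<bar> < \<epsilon>" "\<bar>s n g - \<sigma>0 g\<bar> < \<epsilon>"
        using clus[of "{f, g}" \<epsilon> N] ep f gC by auto
      have npos: "real n > 0" using n(2) by simp
      have "2 * B < \<epsilon> * real N" using N ep by (simp add: pos_divide_less_eq mult.commute)
      also have "\<dots> \<le> \<epsilon> * real n" using n(1) ep by simp
      finally have "2 * B / real n < \<epsilon>" using npos by (simp add: pos_divide_less_eq mult.commute)
      then show ?thesis using diff[OF n(2)] n(3,4) by linarith
    qed
    from small_zero[OF _ this] show ?thesis unfolding g_def by simp
  qed
  have harm: "\<sigma>0 (\<lambda>y. pc x y f) = \<sigma> (\<lambda>u. pc x u (\<lambda>w. \<sigma>0 (\<lambda>y. pc w y f)))" if f: "f \<in> Cfun" for f x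
  proof -
    have Lx: "(\<lambda>v. pc x v f) \<in> Cfun" using hL[OF H f] .
    have "\<sigma>0 (\<lambda>y. pc x y f) = \<sigma>0 (\<lambda>y. \<sigma> (\<lambda>u. pc u y (\<lambda>v. pc x v f)))" using inv[OF Lx] by simp
    also have "\<dots> = \<sigma> (\<lambda>u. \<sigma>0 (\<lambda>y. pc u y (\<lambda>v. pc x v f)))" using fub[OF H pmS pm0 Lx] by simp
    also have "\<dots> = \<sigma> (\<lambda>u. \<sigma>0 (\<lambda>y. pc x u (\<lambda>w. pc w y f)))" using hassoc[OF H f] by simp
    also have "\<dots> = \<sigma> (\<lambda>u. pc x u (\<lambda>w. \<sigma>0 (\<lambda>y. pc w y f)))" using fub[OF H hpm[OF H] pm0 f] by simp
    finally show ?thesis .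
  qed
  \<comment> \<open>maximum principle\<close>
  have le: "\<sigma>0 (\<lambda>y. pc x y f) \<le> \<sigma>0 f" if f: "f \<in> Cfun" for f x
  proof -
    define \<psi> where "\<psi> = (\<lambda>w. \<sigma>0 (\<lambda>y. pc w y f))"
    have \<psi>C: "\<psi> \<in> Cfun" unfolding \<psi>_def by (rule convC[OF H pm0 f])
    have hmx: "\<psi> w = \<sigma> (\<lambda>u. pc w u \<psi>)" for w unfolding \<psi>_def by (rule harm[OF f])
    have hm: "\<psi> = (\<lambda>w. \<sigma> (\<lambda>u. pc w u \<psi>))" by (rule ext) (rule hmx)
    obtain x0 where x0: "\<forall>y. \<psi> y \<le> \<psi> x0"
      using continuous_attains_sup[OF hcomp[OF H] UNIV_not_empty, of \<psi>] \<psi>C by (auto simp: Cfun_iff)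
    define M where "M = \<psi> x0"
    have \<psi>M: "\<And>y. \<psi> y \<le> M" using x0 M_def by auto
    define h where "h = (\<lambda>a. pc x0 a \<psi>)"
    have hC: "h \<in> Cfun" unfolding h_def by (rule hL[OF H \<psi>C])
    have hM: "\<And>a. h a \<le> M" unfolding h_def by (rule pc_le[OF \<psi>C \<psi>M])
    define C where "C = {a. h a = M}"
    have cC: "closed C" unfolding C_def using hC by (intro closed_Collect_eq) (auto simp: Cfun_iff)
    define A where "A = msupp \<sigma>"
    have "\<sigma> h = M" unfolding h_def M_def by (rule hmx[symmetric])
    then have AC: "A \<subseteq> C" unfolding A_def C_def using maxsupp[OF H pmS S1 hC hM] by auto
    have propg: "msupp (pc a u) \<subseteq> C" if a: "a \<in> C" and u: "u \<in> A" for a u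
    proof -
      have "M = pc x0 a \<psi>" using a by (simp add: C_def h_def)
      also have "\<dots> = pc x0 a (\<lambda>w. \<sigma> (\<lambda>u. pc w u \<psi>))" by (rule arg_cong[OF hm])
      also have "\<dots> = \<sigma> (\<lambda>u. pc x0 a (\<lambda>w. pc w u \<psi>))" using fub[OF H hpm[OF H] pmS \<psi>C] by simp
      also have "\<dots> = \<sigma> (\<lambda>u. pc a u h)" unfolding h_def using hassoc[OF H \<psi>C] by simp
      finally have sM: "\<sigma> (\<lambda>u. pc a u h) = M" by simp
      have kC: "(\<lambda>u. pc a u h) \<in> Cfun" by (rule hL[OF H hC])
      have kM: "\<And>u. pc a u h \<le> M" by (rule pc_le[OF hC hM])
      have "pc a u h = M"
        using maxsupp[OF H pmS S1 kC kM sM] u unfolding A_def by simp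
      then show ?thesis unfolding C_def using maxsupp[OF H hpm[OF H] hone[OF H] hC hM] by auto
    qed
    have pw: "setpow pc A (Suc n) \<subseteq> C" for n
    proof (induction n)
      case 0 then show ?case using AC by simp
    next
      case (Suc n) then show ?case using propg by (auto simp: setprod_def)
    qed
    have "(\<Union>n\<in>{1..}. setpow pc A n) \<subseteq> C"
    proof
      fix z assume "z \<in> (\<Union>n\<in>{1..}. setpow pc A n)"
      then obtain n where "n \<ge> 1" "z \<in> setpow pc A n" by auto
      then show "z \<in> C" using pw[of "n - 1"] by (metis Suc_diff_1 less_eq_Suc_le subsetD One_nat_def)
    qed
    then have "closure (\<Union>n\<in>{1..}. setpow pc A n) \<subseteq> C" using cC by (rule closure_minimal)
    then have "iv x0 \<in> C" using ND unfolding nondegenerate_def A_def by auto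
    then have "pc x0 (iv x0) \<psi> = M" by (simp add: C_def h_def)
    then have "\<psi> e = M" using maxsupp[OF H hpm[OF H] hone[OF H] \<psi>C \<psi>M _ hsupp[OF H]] by simp
    moreover have "\<psi> e = \<sigma>0 f" unfolding \<psi>_def using hid[OF H f] by simp
    ultimately show ?thesis using \<psi>M[of x] unfolding \<psi>_def by simp
  qed
  have ge: "\<sigma>0 f \<le> \<sigma>0 (\<lambda>y. pc x y f)" if f: "f \<in> Cfun" for f x
  proof -
    have mf: "(\<lambda>z. - f z) \<in> Cfun" using f by (auto simp: Cfun_iff intro!: continuous_intros)
    have "\<sigma>0 (\<lambda>y. pc x y (\<lambda>z. - f z)) \<le> \<sigma>0 (\<lambda>z. - f z)" by (rule le[OF mf])
    moreover have "(\<lambda>y. pc x y (\<lambda>z. - f z)) = (\<lambda>y. - pc x y f)" using pm_neg[OF hpm[OF H] f] by simp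
    moreover have "\<sigma>0 (\<lambda>y. - pc x y f) = - \<sigma>0 (\<lambda>y. pc x y f)" by (rule pm_neg[OF pm0 hL[OF H f]])
    moreover have "\<sigma>0 (\<lambda>z. - f z) = - \<sigma>0 f" by (rule pm_neg[OF pm0 f])
    ultimately show ?thesis by simp
  qed
  show ?thesis unfolding normalized_haar_def left_haar_def
    using pm0 one0 le ge by (auto intro!: bexI[of _ "\<lambda>_. 1"] antisym)
qed

end

theorem corollary4p13:
  fixes pc :: "'a::t2_space \<Rightarrow> 'a \<Rightarrow> (('a \<Rightarrow> real) \<Rightarrow> real)"
    and e :: 'a and iv :: "'a \<Rightarrow> 'a"
    and \<sigma> \<sigma>0 :: "('a \<Rightarrow> real) \<Rightarrow> real"
  assumes "hypergroup pc e iv"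
    and "\<exists>\<omega>. left_haar pc \<omega>"
    and "prob_meas \<sigma>"
    and "nondegenerate pc \<sigma>"
    and "weakstar_cluster (\<lambda>n. \<lambda>f. (1 / real n) * (\<Sum>k=1..n. mpow pc \<sigma> k f)) \<sigma>0"
  shows "normalized_haar pc \<sigma>0"
  using main[OF assms(1) assms(3) assms(4) assms(5)] .

end
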